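(* Let $q\ge 2$, $n\ge 1$ and $\varepsilon\in\mathbb{N}$ with $\varepsilon\le n$. Let $x\in\mathbb{Z}_q^n$ be a hidden vector, and suppose the attacker has access to an oracle $\texttt{Match}_{x,\varepsilon}$ which, on a query $y\in\mathbb{Z}_q^n$, returns $1$ if $d(x,y)\le\varepsilon$ and $0$ otherwise, and which additionally reveals the set of error positions $\{i: x_i\neq y_i\}$ (but not the values $x_i$) whenever $d(x,y)\le\varepsilon$. Then there is an adaptive query strategy that recovers $x$ using, in the worst case, $\mathcal{O}(q^{n-\varepsilon}+q)$ queries to $\texttt{Match}_{x,\varepsilon}$.
   Context: $\mathbb{Z}_q^n=\{0,\dots,q-1\}^n$ is equipped with the Hamming distance $d(x,y)=|\{i\in\{1,\dots,n\}: x_i\neq y_i\}|$. The attacker may choose each query adaptively based on previous oracle answers; complexity is measured as the number of oracle queries. *)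

theory Defs
  imports Main
begin

definition Zq :: "nat \<Rightarrow> nat \<Rightarrow> nat list set" where
  "Zq q n = {v. length v = n \<and> (\<forall>a\<in>set v. a < q)}"

definition err_pos :: "nat list \<Rightarrow> nat list \<Rightarrow> nat set" where
  "err_pos x y = {i. i < length x \<and> x ! i \<noteq> y ! i}"

definition hamming :: "nat list \<Rightarrow> nat list \<Rightarrow> nat" where
  "hamming x y = card (err_pos x y)"

text \<open>Oracle answer: None = 0; Some E = 1 together with the set E of error positions.\<close>

definition Match :: "nat list \<Rightarrow> nat \<Rightarrow> nat list \<Rightarrow> nat set option" where
  "Match x eps y = (if hamming x y \<le> eps then Some (err_pos x y) else None)"

text \<open>An adaptive query strategy is a decision tree: either output a guess, or
  ask a query and continue depending on the oracle answer.\<close>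

datatype strategy = Output "nat list" | Query "nat list" "nat set option \<Rightarrow> strategy"

primrec run :: "strategy \<Rightarrow> nat list \<Rightarrow> nat \<Rightarrow> nat list \<times> nat list list" where
  "run (Output v) x eps = (v, [])"
| "run (Query y f) x eps =
     (let r = run (f (Match x eps y)) x eps in (fst r, y # snd r))"

end

theory Submission
  imports Defs
begin

primrec qall :: "nat list list \<Rightarrow> (nat set option list \<Rightarrow> strategy) \<Rightarrow> strategy" where
  "qall [] k = k []"
| "qall (y#ys) k = Query y (\<lambda>a. qall ys (\<lambda>as. k (a#as)))"

lemma run_qall:
  "run (qall ys k) x eps =
     (fst (run (k (map (Match x eps) ys)) x eps), ys @ snd (run (k (map (Match x eps) ys)) x eps))"
  by (induct ys arbitrary: k) (auto simp: Let_def)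

lemma zip_map_self: "zip ys (map f ys) = map (\<lambda>y. (y, f y)) ys"
  by (induct ys) auto

definition Ys :: "nat \<Rightarrow> nat \<Rightarrow> nat \<Rightarrow> nat list list" where
  "Ys q n eps = map (\<lambda>p. p @ replicate eps 0) (List.n_lists (n - eps) [0..<q])"

definition setv :: "nat set \<Rightarrow> nat \<Rightarrow> nat list \<Rightarrow> nat list" where
  "setv E v y = map (\<lambda>i. if i \<in> E then v else y ! i) [0..<length y]"

definition decode :: "nat list \<Rightarrow> nat set \<Rightarrow> nat set option list \<Rightarrow> nat list" where
  "decode y0 E bs = map (\<lambda>i. if i \<in> E then (LEAST v. i \<notin> the (bs ! v)) else y0 ! i) [0..<length y0]"

definition phase2 :: "nat \<Rightarrow> nat list \<Rightarrow> nat set \<Rightarrow> strategy" where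
  "phase2 q y0 E = qall (map (\<lambda>v. setv E v y0) [0..<q]) (\<lambda>bs. Output (decode y0 E bs))"

definition Strat :: "nat \<Rightarrow> nat \<Rightarrow> nat \<Rightarrow> strategy" where
  "Strat q n eps = qall (Ys q n eps)
     (\<lambda>as. case hd (filter (\<lambda>(y,a). a \<noteq> None) (zip (Ys q n eps) as)) of
             (y0, a) \<Rightarrow> phase2 q y0 (the a))"

lemma Ys_Zq: "eps \<le> n \<Longrightarrow> 0 < q \<Longrightarrow> set (Ys q n eps) \<subseteq> Zq q n"
  by (auto simp: Ys_def Zq_def set_n_lists subset_iff)

lemma length_Ys: "length (Ys q n eps) = q ^ (n - eps)"
  by (simp add: Ys_def length_n_lists)

lemma err_pos_setv:
  assumes "length y0 = length x" "E = err_pos x y0"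
  shows "err_pos x (setv E v y0) = {i \<in> E. x ! i \<noteq> v}"
proof (rule set_eqI)
  fix i
  have Ei: "i \<in> E \<longleftrightarrow> i < length x \<and> x ! i \<noteq> y0 ! i" using assms(2) by (simp add: err_pos_def)
  have "i < length x \<Longrightarrow> setv E v y0 ! i = (if i \<in> E then v else y0 ! i)"
    using assms(1) by (simp add: setv_def)
  thus "i \<in> err_pos x (setv E v y0) \<longleftrightarrow> i \<in> {i \<in> E. x ! i \<noteq> v}"
    unfolding err_pos_def using Ei by auto
qed

lemma phase2_run:
  assumes x: "x \<in> Zq q n" and ly: "length y0 = n" and yq: "set y0 \<subseteq> {..<q}"
    and E: "E = err_pos x y0" and h: "hamming x y0 \<le> eps"
  shows "fst (run (phase2 q y0 E) x eps) = x \<and>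
         set (snd (run (phase2 q y0 E) x eps)) \<subseteq> Zq q n \<and>
         length (snd (run (phase2 q y0 E) x eps)) = q"
proof -
  have lx: "length x = n" and xq: "\<And>i. i < n \<Longrightarrow> x ! i < q" using x by (auto simp: Zq_def)
  have finE: "finite E" using E by (simp add: err_pos_def)
  have M: "Match x eps (setv E v y0) = Some {i \<in> E. x ! i \<noteq> v}" for v
  proof -
    have "card {i \<in> E. x ! i \<noteq> v} \<le> card E" using finE by (intro card_mono) auto
    also have "\<dots> \<le> eps" using h E by (simp add: hamming_def)
    finally show ?thesis using err_pos_setv[OF _ E, of v] ly lx
      by (simp add: Match_def hamming_def)
  qed
  define bs where "bs = map (\<lambda>v. Match x eps (setv E v y0)) [0..<q]"
  have bs: "v < q \<Longrightarrow> bs ! v = Some {i \<in> E. x ! i \<noteq> v}" for v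
    by (simp add: bs_def M)
  have dec: "decode y0 E bs = x"
  proof (rule nth_equalityI)
    show "length (decode y0 E bs) = length x" using ly lx by (simp add: decode_def)
  next
    fix i assume "i < length (decode y0 E bs)"
    hence i: "i < n" using ly by (simp add: decode_def)
    show "decode y0 E bs ! i = x ! i"
    proof (cases "i \<in> E")
      case True
      have "(LEAST v. i \<notin> the (bs ! v)) = x ! i"
      proof (rule Least_equality)
        show "i \<notin> the (bs ! (x ! i))" using bs[OF xq[OF i]] by simp
      next
        fix v assume "i \<notin> the (bs ! v)"
        show "x ! i \<le> v"
        proof (rule ccontr)
          assume "\<not> x ! i \<le> v"
          hence "v < q" "x ! i \<noteq> v" using xq[OF i] by auto
          thus False using bs[of v] True \<open>i \<notin> the (bs ! v)\<close> by simp
        qed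
      qed
      thus ?thesis using True i ly by (simp add: decode_def)
    next
      case False
      thus ?thesis using i ly lx E by (simp add: decode_def err_pos_def)
    qed
  qed
  have Z: "set (map (\<lambda>v. setv E v y0) [0..<q]) \<subseteq> Zq q n"
    using yq ly by (auto simp: Zq_def setv_def subset_iff)
  show ?thesis
  proof -
    have "map (Match x eps) (map (\<lambda>v. setv E v y0) [0..<q]) = bs" by (simp add: bs_def)
    thus ?thesis unfolding phase2_def run_qall using dec Z by simp
  qed
qed

theorem theorem2:
  shows "\<exists>C::nat. \<forall>q n eps. q \<ge> 2 \<longrightarrow> n \<ge> 1 \<longrightarrow> eps \<le> n \<longrightarrow>
     (\<exists>S::strategy. \<forall>x \<in> Zq q n.
        fst (run S x eps) = x \<and>
        set (snd (run S x eps)) \<subseteq> Zq q n \<and>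
        length (snd (run S x eps)) \<le> C * (q ^ (n - eps) + q))"
proof (intro exI[of _ 1] allI impI)
  fix q n eps :: nat
  assume "q \<ge> 2" "n \<ge> 1" and en: "eps \<le> n"
  hence q0: "0 < q" by simp
  show "\<exists>S::strategy. \<forall>x \<in> Zq q n.
        fst (run S x eps) = x \<and>
        set (snd (run S x eps)) \<subseteq> Zq q n \<and>
        length (snd (run S x eps)) \<le> 1 * (q ^ (n - eps) + q)"
  proof (intro exI[of _ "Strat q n eps"] ballI)
    fix x assume x: "x \<in> Zq q n"
    have lx: "length x = n" and xq: "set x \<subseteq> {..<q}" using x by (auto simp: Zq_def)
    let ?L = "filter (\<lambda>(y,a). a \<noteq> None) (map (\<lambda>y. (y, Match x eps y)) (Ys q n eps))"
    define w where "w = take (n - eps) x @ replicate eps 0"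
    have wY: "w \<in> set (Ys q n eps)"
      using lx xq en set_take_subset[of "n - eps" x]
      by (auto simp: Ys_def set_n_lists w_def image_iff intro!: exI[of _ "take (n - eps) x"])
    have "err_pos x w \<subseteq> {n - eps..<n}"
      using lx by (auto simp: err_pos_def w_def nth_append)
    hence "hamming x w \<le> eps" unfolding hamming_def
      by (metis card_atLeastLessThan card_mono diff_diff_cancel en finite_atLeastLessThan)
    hence "(w, Match x eps w) \<in> set ?L" using wY by (auto simp: Match_def)
    hence "?L \<noteq> []" by (metis empty_iff empty_set)
    hence "hd ?L \<in> set ?L" by (rule hd_in_set)
    define y0 where "y0 = fst (hd ?L)"
    define a where "a = snd (hd ?L)"
    have ha: "hd ?L = (y0, a)" by (simp add: y0_def a_def)
    have hL: "(y0, a) \<in> set ?L" using ha \<open>hd ?L \<in> set ?L\<close> by simp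
    have hL2: "(y0, a) \<in> set (map (\<lambda>y. (y, Match x eps y)) (Ys q n eps)) \<and> a \<noteq> None"
      using hL by (simp only: set_filter mem_Collect_eq case_prod_conv simp_thms)
    have y0Y: "y0 \<in> set (Ys q n eps)" and a: "a = Match x eps y0" and an: "a \<noteq> None"
      using hL2 by auto
    have hy: "hamming x y0 \<le> eps" and ta: "the a = err_pos x y0"
      using a an by (auto simp: Match_def split: if_splits)
    have y0Z: "y0 \<in> Zq q n" using Ys_Zq[OF en q0] y0Y by auto
    have ly: "length y0 = n" and yq: "set y0 \<subseteq> {..<q}" using y0Z by (auto simp: Zq_def)
    note P = phase2_run[OF x ly yq ta hy]
    have R: "run (Strat q n eps) x eps =
       (fst (run (phase2 q y0 (the a)) x eps), Ys q n eps @ snd (run (phase2 q y0 (the a)) x eps))"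
      unfolding Strat_def run_qall zip_map_self using ha by simp
    show "fst (run (Strat q n eps) x eps) = x \<and>
        set (snd (run (Strat q n eps) x eps)) \<subseteq> Zq q n \<and>
        length (snd (run (Strat q n eps) x eps)) \<le> 1 * (q ^ (n - eps) + q)"
      using P Ys_Zq[OF en q0] by (simp add: R length_Ys)
  qed
qed

end
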